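(* Let $A=(\Sigma, Q, Q_0, \delta, F)$ be an $n$-state NFA that remembers the last symbol. For each symbol $a \in \Sigma$, let $Q_a=\bigcup_{q\in Q}\delta(q,a) \subseteq Q$ be the set of states reachable by a transition by $a$, and let $n_1 = \max_{a \in \Sigma} |Q_a|$. Then there exists a DFA with at most $\max(2^{\frac{n}{2}+1}, 2^{n_1+1})$ states that recognizes $L(A)$.
   Context: An NFA is a quintuple $(\Sigma,Q,Q_0,\delta,F)$ with finite alphabet $\Sigma$, finite state set $Q$, set of initial states $Q_0\subseteq Q$, transition function $\delta\colon Q\times\Sigma\to 2^Q$ and accepting states $F\subseteq Q$; $L(A)$ is the set of strings having an accepting computation. A DFA is an NFA with one initial state and exactly one transition from each state by each symbol. An NFA remembers the last symbol if its state set is a disjoint union of subsets $P_a$ ($a\in\Sigma$) with $\delta(q,a)\subseteq P_a$ for all $q\in Q$, $a\in\Sigma$. *)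

theory Defs
  imports Complex_Main
begin

definition is_nfa :: "'a set \<Rightarrow> 's set \<Rightarrow> 's set \<Rightarrow> ('s \<Rightarrow> 'a \<Rightarrow> 's set) \<Rightarrow> 's set \<Rightarrow> bool" where
  "is_nfa \<Sigma> Q Q0 \<delta> F \<longleftrightarrow> finite \<Sigma> \<and> finite Q \<and> Q0 \<subseteq> Q \<and> F \<subseteq> Q \<and>
     (\<forall>q\<in>Q. \<forall>a\<in>\<Sigma>. \<delta> q a \<subseteq> Q)"

definition nfa_lang :: "'a set \<Rightarrow> 's set \<Rightarrow> 's set \<Rightarrow> ('s \<Rightarrow> 'a \<Rightarrow> 's set) \<Rightarrow> 's set \<Rightarrow> 'a list set" where
  "nfa_lang \<Sigma> Q Q0 \<delta> F = {w \<in> lists \<Sigma>. \<exists>p :: nat \<Rightarrow> 's.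
     p 0 \<in> Q0 \<and> (\<forall>i < length w. p (Suc i) \<in> \<delta> (p i) (w ! i)) \<and> p (length w) \<in> F}"

definition is_dfa :: "'a set \<Rightarrow> 's set \<Rightarrow> 's \<Rightarrow> ('s \<Rightarrow> 'a \<Rightarrow> 's) \<Rightarrow> 's set \<Rightarrow> bool" where
  "is_dfa \<Sigma> Q q0 \<delta> F \<longleftrightarrow> finite \<Sigma> \<and> finite Q \<and> q0 \<in> Q \<and> F \<subseteq> Q \<and>
     (\<forall>q\<in>Q. \<forall>a\<in>\<Sigma>. \<delta> q a \<in> Q)"

definition dfa_lang :: "'a set \<Rightarrow> 's set \<Rightarrow> 's \<Rightarrow> ('s \<Rightarrow> 'a \<Rightarrow> 's) \<Rightarrow> 's set \<Rightarrow> 'a list set" where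
  "dfa_lang \<Sigma> Q q0 \<delta> F = {w \<in> lists \<Sigma>. fold (\<lambda>a q. \<delta> q a) w q0 \<in> F}"

definition remembers_last :: "'a set \<Rightarrow> 's set \<Rightarrow> ('s \<Rightarrow> 'a \<Rightarrow> 's set) \<Rightarrow> bool" where
  "remembers_last \<Sigma> Q \<delta> \<longleftrightarrow> (\<exists>P :: 'a \<Rightarrow> 's set.
     Q = (\<Union>a\<in>\<Sigma>. P a) \<and> (\<forall>a\<in>\<Sigma>. \<forall>b\<in>\<Sigma>. a \<noteq> b \<longrightarrow> P a \<inter> P b = {}) \<and>
     (\<forall>q\<in>Q. \<forall>a\<in>\<Sigma>. \<delta> q a \<subseteq> P a))"

end

theory Submission imports Defs "HOL-Analysis.Convex" begin

lemma chord_bound: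
  fixes k h :: real
  assumes "0 \<le> k" "k \<le> h" "0 < h"
  shows "2 powr k - 1 \<le> k / h * (2 powr h - 1)"
proof -
  define t where "t = k / h"
  have t: "0 \<le> t" "t \<le> 1" using assms by (auto simp: t_def)
  have "exp ((1 - t) *\<^sub>R 0 + t *\<^sub>R (h * ln 2)) \<le> (1 - t) * exp 0 + t * exp (h * ln 2)"
    using t by (intro convex_onD[OF exp_convex]) auto
  moreover have "t * (h * ln 2) = k * ln 2" using assms by (simp add: t_def)
  ultimately have "2 powr k \<le> 1 - t + t * 2 powr h"
    by (simp add: powr_def mult.commute)
  then show ?thesis by (simp add: t_def algebra_simps)
qed

lemma superadd:
  fixes k :: "'a \<Rightarrow> nat"
  assumes "finite B"
  shows "(\<Sum>b\<in>B. 2^(k b) - 1) \<le> (2::nat)^(\<Sum>b\<in>B. k b) - 1"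
  using assms
proof (induction B rule: finite_induct)
  case empty then show ?case by simp
next
  case (insert x B)
  let ?s = "\<Sum>b\<in>B. k b"
  have 1: "(1::nat) \<le> 2^(k x)" "(1::nat) \<le> 2^?s" by auto
  have "(2::nat)^(k x) - 1 + (2^?s - 1) \<le> 2^(k x + ?s) - 1"
  proof -
    have "(2^(k x) - 1) * (2^?s - 1) \<ge> (0::nat)" by simp
    have "2^(k x + ?s) = (2::nat)^(k x) * 2^?s" by (simp add: power_add)
    moreover have "(2::nat)^(k x) + 2^?s \<le> 2^(k x) * 2^?s + 1"
    proof -
      obtain u v where "2^(k x) = Suc u" "(2::nat)^?s = Suc v" using 1
        by (metis Suc_le_D One_nat_def)
      then show ?thesis by simp
    qed
    ultimately show ?thesis using 1 by linarith
  qed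
  note ineq = this
  have "(\<Sum>b\<in>insert x B. 2^(k b) - 1) = (2::nat)^(k x) - 1 + (\<Sum>b\<in>B. 2^(k b) - 1)"
    using insert by simp
  also have "\<dots> \<le> (2::nat)^(k x) - 1 + (2^?s - 1)" by (rule add_left_mono[OF insert.IH])
  also have "\<dots> \<le> 2^(k x + ?s) - 1" by (rule ineq)
  also have "\<dots> = 2^(\<Sum>b\<in>insert x B. k b) - 1" using insert by simp
  finally show ?case .
qed

lemma num_bound:
  fixes k :: "'a \<Rightarrow> nat"
  assumes "finite S" "(\<Sum>a\<in>S. k a) \<le> n"
  shows "real (2 + (\<Sum>a\<in>S. 2^(k a) - 1)) \<le> max (2 powr (real n / 2 + 1)) (2^(Max (insert 0 (k ` S)) + 1))"
proof (cases "\<forall>a\<in>S. real (k a) \<le> real n / 2")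
  case True
  show ?thesis
  proof (cases "n = 0")
    case True
    then have "\<forall>a\<in>S. k a = 0" using assms by simp
    then show ?thesis using True by simp
  next
    case False
    define h where "h = real n / 2"
    have h: "h > 0" using False by (simp add: h_def)
    have "real (\<Sum>a\<in>S. 2^(k a) - 1) = (\<Sum>a\<in>S. 2 powr (real (k a)) - 1)"
      by (simp add: of_nat_diff powr_realpow)
    also have "\<dots> \<le> (\<Sum>a\<in>S. real (k a) / h * (2 powr h - 1))"
      using True h by (intro sum_mono chord_bound) (auto simp: h_def)
    also have "\<dots> = real (\<Sum>a\<in>S. k a) / h * (2 powr h - 1)"
      by (simp add: sum_distrib_right sum_divide_distrib)
    also have "\<dots> \<le> real n / h * (2 powr h - 1)"
      proof -
      have "real (\<Sum>a\<in>S. k a) \<le> real n" using assms(2) by linarith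
      then show ?thesis using h by (intro mult_right_mono divide_right_mono) (auto simp: ge_one_powr_ge_zero)
    qed
    also have "\<dots> = 2 powr (h + 1) - 2" using h by (simp add: h_def powr_add)
    finally show ?thesis by (simp add: h_def)
  qed
next
  case False
  then obtain a0 where a0: "a0 \<in> S" "real (k a0) > real n / 2" by auto
  have le: "k b \<le> n - k a0" if "b \<in> S - {a0}" for b
  proof -
    have "(\<Sum>a\<in>{a0,b}. k a) \<le> (\<Sum>a\<in>S. k a)"
      using that a0 assms by (intro sum_mono2) auto
    then show ?thesis using that assms by auto
  qed
  have rest: "(\<Sum>a\<in>S-{a0}. k a) \<le> n - k a0"
    using sum.remove[OF assms(1) a0(1), of k] assms by simp
  have "(\<Sum>a\<in>S. 2^(k a) - 1) = (2^(k a0) - 1) + (\<Sum>a\<in>S-{a0}. (2::nat)^(k a) - 1)"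
    by (rule sum.remove[OF assms(1) a0(1)])
  also have "(\<Sum>a\<in>S-{a0}. (2::nat)^(k a) - 1) \<le> 2^(\<Sum>a\<in>S-{a0}. k a) - 1"
    using assms by (intro superadd) auto
  also have "\<dots> \<le> 2^(n - k a0) - 1" using rest by (intro diff_le_mono power_increasing) auto
  also have "\<dots> \<le> 2^(k a0) - 1" using a0 by (intro diff_le_mono power_increasing) auto
  finally have 1: "2 + (\<Sum>a\<in>S. 2^(k a) - 1) \<le> 2 + 2 * (2^(k a0) - 1::nat)" by linarith
  have "(1::nat) \<le> 2^(k a0)" by simp
  moreover have "\<forall>m::nat. 1 \<le> m \<longrightarrow> 2 + 2*(m-1) = 2*m" by auto
  ultimately have "2 + 2 * (2^(k a0) - 1::nat) = 2^(k a0 + 1)" by simp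
  also have "\<dots> \<le> 2^(Max (insert 0 (k ` S)) + 1)"
    using a0 assms by (intro power_increasing) auto
  finally have "2 + (\<Sum>a\<in>S. 2^(k a) - 1) \<le> (2::nat)^(Max (insert 0 (k ` S)) + 1)" using 1 by linarith
  then have "real (2 + (\<Sum>a\<in>S. 2^(k a) - 1)) \<le> 2^(Max (insert 0 (k ` S)) + 1)"
    by (metis of_nat_le_iff of_nat_numeral of_nat_power)
  then show ?thesis by linarith
qed

lemma fold_step_path:
  "q \<in> fold (\<lambda>a X. \<Union>q\<in>X. \<delta> q a) w X \<longleftrightarrow>
   (\<exists>p::nat \<Rightarrow> 's. p 0 \<in> X \<and> (\<forall>i<length w. p (Suc i) \<in> \<delta> (p i) (w ! i)) \<and> p (length w) = q)"
proof (induction w arbitrary: X)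
  case Nil
  then show ?case by auto
next
  case (Cons a w)
  show ?case
  proof
    assume "q \<in> fold (\<lambda>a X. \<Union>q\<in>X. \<delta> q a) (a # w) X"
    then obtain p where p: "p 0 \<in> (\<Union>q\<in>X. \<delta> q a)" "\<forall>i<length w. p (Suc i) \<in> \<delta> (p i) (w ! i)"
      "p (length w) = q" using Cons.IH by auto
    then obtain x where x: "x \<in> X" "p 0 \<in> \<delta> x a" by auto
    define p' where "p' = case_nat x p"
    have "\<forall>i<length (a # w). p' (Suc i) \<in> \<delta> (p' i) ((a # w) ! i)"
    proof (intro allI impI)
      fix i assume "i < length (a # w)"
      then show "p' (Suc i) \<in> \<delta> (p' i) ((a # w) ! i)"
        using p x by (cases i) (auto simp: p'_def)
    qed
    then show "\<exists>p::nat \<Rightarrow> 's. p 0 \<in> X \<and> (\<forall>i<length (a # w). p (Suc i) \<in> \<delta> (p i) ((a # w) ! i)) \<and> p (length (a # w)) = q"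
      using x p by (intro exI[of _ p']) (auto simp: p'_def)
  next
    assume "\<exists>p::nat \<Rightarrow> 's. p 0 \<in> X \<and> (\<forall>i<length (a # w). p (Suc i) \<in> \<delta> (p i) ((a # w) ! i)) \<and> p (length (a # w)) = q"
    then obtain p :: "nat \<Rightarrow> 's" where p: "p 0 \<in> X" "\<forall>i<length (a # w). p (Suc i) \<in> \<delta> (p i) ((a # w) ! i)"
      "p (length (a # w)) = q" by blast
    have "p 1 \<in> (\<Union>q\<in>X. \<delta> q a)" using p(1) p(2)[rule_format, of 0] by auto
    moreover have "\<forall>i<length w. (p \<circ> Suc) (Suc i) \<in> \<delta> ((p \<circ> Suc) i) (w ! i)"
      using p(2) by auto
    ultimately have "q \<in> fold (\<lambda>a X. \<Union>q\<in>X. \<delta> q a) w (\<Union>q\<in>X. \<delta> q a)"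
      using Cons.IH[of "\<Union>q\<in>X. \<delta> q a"] p(3) by (intro iffD2[OF Cons.IH] exI[of _ "p \<circ> Suc"]) auto
    then show "q \<in> fold (\<lambda>a X. \<Union>q\<in>X. \<delta> q a) (a # w) X" by simp
  qed
qed

theorem lemma2:
  fixes \<Sigma> :: "'a set" and Q Q0 F :: "'s set" and \<delta> :: "'s \<Rightarrow> 'a \<Rightarrow> 's set"
  assumes "is_nfa \<Sigma> Q Q0 \<delta> F"
    and "remembers_last \<Sigma> Q \<delta>"
  shows "\<exists>(Q' :: nat set) q0 \<delta>' F'. is_dfa \<Sigma> Q' q0 \<delta>' F' \<and>
           dfa_lang \<Sigma> Q' q0 \<delta>' F' = nfa_lang \<Sigma> Q Q0 \<delta> F \<and>
           real (card Q') \<le> max (2 powr (real (card Q) / 2 + 1))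
             (2 ^ (Max (insert 0 ((\<lambda>a. card (\<Union>q\<in>Q. \<delta> q a)) ` \<Sigma>)) + 1))"
proof -
  have fS: "finite \<Sigma>" and fQ: "finite Q" and Q0: "Q0 \<subseteq> Q" and dQ: "\<And>q a. q \<in> Q \<Longrightarrow> a \<in> \<Sigma> \<Longrightarrow> \<delta> q a \<subseteq> Q"
    using assms(1) unfolding is_nfa_def by auto
  obtain P where P: "Q = (\<Union>a\<in>\<Sigma>. P a)" "\<forall>a\<in>\<Sigma>. \<forall>b\<in>\<Sigma>. a \<noteq> b \<longrightarrow> P a \<inter> P b = {}"
    "\<forall>q\<in>Q. \<forall>a\<in>\<Sigma>. \<delta> q a \<subseteq> P a"
    using assms(2) unfolding remembers_last_def by blast
  define Qa where "Qa a = (\<Union>q\<in>Q. \<delta> q a)" for a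
  define step where "step X a = (\<Union>q\<in>X. \<delta> q a)" for X a
  define S where "S = insert Q0 (\<Union>a\<in>\<Sigma>. Pow (Qa a))"
  have QaQ: "Qa a \<subseteq> Q" if "a \<in> \<Sigma>" for a using dQ that by (auto simp: Qa_def)
  have fQa: "finite (Qa a)" if "a \<in> \<Sigma>" for a using QaQ[OF that] fQ finite_subset by blast
  have finS: "finite S" unfolding S_def using fS fQa by auto
  have SQ: "X \<subseteq> Q" if "X \<in> S" for X using that Q0 QaQ by (auto simp: S_def)
  have stepS: "step X a \<in> S" if "X \<in> S" "a \<in> \<Sigma>" for X a
  proof -
    have "step X a \<subseteq> Qa a" using SQ[OF that(1)] by (auto simp: step_def Qa_def)
    then show ?thesis using that(2) by (auto simp: S_def)
  qed
  have foldS: "fold (\<lambda>a X. step X a) w X \<in> S" if "w \<in> lists \<Sigma>" "X \<in> S" for w X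
    using that by (induction w arbitrary: X) (auto intro: stepS)
  obtain h where h: "bij_betw h S {0..<card S}" using ex_bij_betw_finite_nat[OF finS] by blast
  define g where "g = inv_into S h"
  have gh: "g (h X) = X" if "X \<in> S" for X
    using h that by (simp add: g_def bij_betw_def inv_into_f_f)
  have hS: "h X \<in> {0..<card S}" if "X \<in> S" for X using h that by (auto simp: bij_betw_def)
  have gS: "g i \<in> S" if "i \<in> {0..<card S}" for i
    using h that unfolding g_def bij_betw_def by (metis inv_into_into)
  define Q' where "Q' = {0..<card S}"
  define \<delta>' where "\<delta>' i a = h (step (g i) a)" for i a
  define F' where "F' = {i \<in> Q'. g i \<inter> F \<noteq> {}}"
  have Q0S: "Q0 \<in> S" by (simp add: S_def)
  have dfa: "is_dfa \<Sigma> Q' (h Q0) \<delta>' F'"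
    unfolding is_dfa_def using fS Q0S hS gS stepS
    by (auto simp: Q'_def F'_def \<delta>'_def)
  have foldh: "fold (\<lambda>a q. \<delta>' q a) w (h X) = h (fold (\<lambda>a X. step X a) w X)"
    if "w \<in> lists \<Sigma>" "X \<in> S" for w X
    using that by (induction w arbitrary: X) (auto simp: \<delta>'_def gh stepS)
  have lang: "dfa_lang \<Sigma> Q' (h Q0) \<delta>' F' = nfa_lang \<Sigma> Q Q0 \<delta> F"
  proof -
    have "fold (\<lambda>a q. \<delta>' q a) w (h Q0) \<in> F' \<longleftrightarrow>
      (\<exists>p :: nat \<Rightarrow> 's. p 0 \<in> Q0 \<and> (\<forall>i < length w. p (Suc i) \<in> \<delta> (p i) (w ! i)) \<and> p (length w) \<in> F)"
      if w: "w \<in> lists \<Sigma>" for w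
    proof -
      let ?Y = "fold (\<lambda>a X. step X a) w Q0"
      have Y: "?Y \<in> S" using foldS[OF w Q0S] .
      have "fold (\<lambda>a q. \<delta>' q a) w (h Q0) \<in> F' \<longleftrightarrow> ?Y \<inter> F \<noteq> {}"
        using foldh[OF w Q0S] Y hS gh by (auto simp: F'_def Q'_def)
      also have "\<dots> \<longleftrightarrow> (\<exists>q\<in>F. q \<in> ?Y)" by blast
      also have "\<dots> \<longleftrightarrow> (\<exists>p :: nat \<Rightarrow> 's. p 0 \<in> Q0 \<and> (\<forall>i < length w. p (Suc i) \<in> \<delta> (p i) (w ! i)) \<and> p (length w) \<in> F)"
        unfolding step_def fold_step_path by blast
      finally show ?thesis .
    qed
    then show ?thesis unfolding dfa_lang_def nfa_lang_def by blast
  qed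
  have sumk: "(\<Sum>a\<in>\<Sigma>. card (Qa a)) \<le> card Q"
  proof -
    have QaP: "Qa a \<subseteq> P a" if "a \<in> \<Sigma>" for a using P(3) that by (auto simp: Qa_def)
    have "card (\<Union>a\<in>\<Sigma>. Qa a) = (\<Sum>a\<in>\<Sigma>. card (Qa a))"
    proof (rule card_UN_disjoint[OF fS])
      show "\<forall>i\<in>\<Sigma>. finite (Qa i)" using fQa by blast
      show "\<forall>i\<in>\<Sigma>. \<forall>j\<in>\<Sigma>. i \<noteq> j \<longrightarrow> Qa i \<inter> Qa j = {}"
        using QaP P(2) by blast
    qed
    moreover have "card (\<Union>a\<in>\<Sigma>. Qa a) \<le> card Q" using QaQ fQ by (intro card_mono) auto
    ultimately show ?thesis by simp
  qed
  have cardS: "card S \<le> 2 + (\<Sum>a\<in>\<Sigma>. 2 ^ card (Qa a) - 1)"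
  proof -
    have "card S \<le> 1 + card (\<Union>a\<in>\<Sigma>. Pow (Qa a))" unfolding S_def
      by (simp add: card_insert_le_m1 card_insert_if)
    also have "(\<Union>a\<in>\<Sigma>. Pow (Qa a)) \<subseteq> insert {} (\<Union>a\<in>\<Sigma>. Pow (Qa a) - {{}})" by auto
    then have "card (\<Union>a\<in>\<Sigma>. Pow (Qa a)) \<le> card (insert {} (\<Union>a\<in>\<Sigma>. Pow (Qa a) - {{}}))"
      using fS fQa by (intro card_mono) auto
    also have "\<dots> \<le> 1 + card (\<Union>a\<in>\<Sigma>. Pow (Qa a) - {{}})"
    proof -
      have ins: "\<And>x A. finite A \<Longrightarrow> card (insert x A) \<le> Suc (card A)" by (simp add: card_insert_if)
      have "finite (\<Union>a\<in>\<Sigma>. Pow (Qa a) - {{}})" using fS fQa by auto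
      from ins[OF this, of "{}"] show ?thesis by simp
    qed
    also have "\<dots> \<le> 1 + (\<Sum>a\<in>\<Sigma>. card (Pow (Qa a) - {{}}))"
      using card_UN_le[OF fS, of "\<lambda>a. Pow (Qa a) - {{}}"] by (simp only:)
    also have "(\<Sum>a\<in>\<Sigma>. card (Pow (Qa a) - {{}})) = (\<Sum>a\<in>\<Sigma>. 2 ^ card (Qa a) - 1)"
      using fQa by (intro sum.cong) (auto simp: card_Pow)
    finally show ?thesis by linarith
  qed
  have "real (card Q') \<le> real (2 + (\<Sum>a\<in>\<Sigma>. 2 ^ card (Qa a) - 1))"
  proof -
    have "card Q' \<le> 2 + (\<Sum>a\<in>\<Sigma>. 2 ^ card (Qa a) - 1)" using cardS by (simp add: Q'_def)
    then show ?thesis by (simp only: of_nat_le_iff)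
  qed
  also have "\<dots> \<le> max (2 powr (real (card Q) / 2 + 1)) (2 ^ (Max (insert 0 ((\<lambda>a. card (Qa a)) ` \<Sigma>)) + 1))"
    by (rule num_bound[OF fS sumk])
  finally show ?thesis using dfa lang unfolding Qa_def by blast
qed

end
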